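(* For every $n\ge 4$, the vertex of $\mathrm{PYR}(n)$ corresponding to the pyramidal tour with code $\langle 1,1,\dots,1\rangle$ and the vertex corresponding to the pyramidal tour with code $\langle 0,0,\dots,0\rangle$ are each adjacent to every other vertex of $\mathrm{PYR}(n)$.
   Context: Let $K_n$ be the complete undirected graph on vertex set $\{1,\dots,n\}$ with edge set $E$. A Hamiltonian cycle $\langle 1,i_1,\dots,i_r,n,j_1,\dots,j_{n-r-2}\rangle$ is called a pyramidal tour if $i_1<i_2<\dots<i_r$ and $j_1>j_2>\dots>j_{n-r-2}$; tours are undirected. Let $PT_n$ be the set of all pyramidal tours. For $x\in PT_n$ its characteristic vector $x^v\in\mathbb{R}^E$ has $x^v_e=1$ if edge $e$ lies in $x$ and $0$ otherwise. The pyramidal tours polytope is $\mathrm{PYR}(n)=\operatorname{conv}\{x^v : x\in PT_n\}$. Every pyramidal tour contains the edge $\{1,2\}$; the tour is oriented so that vertex $2$ belongs to the increasing part. The code of $x$ is the $0/1$ vector $x^c=(x^c_3,\dots,x^c_{n-1})$ with $x^c_i=1$ if vertex $i$ is visited in the increasing part of $x$ and $x^c_i=0$ otherwise; $x\mapsto x^c$ is a bijection from $PT_n$ onto $\{0,1\}^{n-3}$. Two vertices are adjacent if the segment joining them is a one-dimensional face of the polytope. *)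

theory Defs
  imports "HOL-Analysis.Analysis" "HOL-Library.Function_Algebras"
begin

text \<open>Real vector space structure on functions (pointwise), so that
  \<open>\<real>^E\<close> can be modelled as functions from edges (2-element vertex sets)
  to reals, uniformly in n.\<close>

instantiation "fun" :: (type, real_vector) real_vector
begin
definition scaleR_fun :: "real \<Rightarrow> ('a \<Rightarrow> 'b) \<Rightarrow> 'a \<Rightarrow> 'b"
  where "scaleR_fun c f = (\<lambda>x. c *\<^sub>R f x)"
instance
  by standard (simp_all add: scaleR_fun_def fun_eq_iff scaleR_add_right scaleR_add_left)
end

definition Kn_edges :: "nat \<Rightarrow> nat set set" where
  "Kn_edges n = {{i, j} | i j. i \<in> {1..n} \<and> j \<in> {1..n} \<and> i \<noteq> j}"

definition tour_edges :: "nat list \<Rightarrow> nat set set" where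
  "tour_edges xs = {{xs ! k, xs ! ((k + 1) mod length xs)} | k. k < length xs}"

text \<open>The sequence 1, inc, n, dec describes a pyramidal tour of K_n:
  inc strictly increasing, dec strictly decreasing, together visiting each of
  2..n-1 exactly once.\<close>
definition pyr_seq :: "nat \<Rightarrow> nat list \<Rightarrow> nat list \<Rightarrow> bool" where
  "pyr_seq n inc dec \<longleftrightarrow> sorted_wrt (<) inc \<and> sorted_wrt (>) dec \<and>
     distinct (inc @ dec) \<and> set (inc @ dec) = {2..n-1}"

definition PT :: "nat \<Rightarrow> nat set set set" where
  "PT n = {tour_edges (1 # inc @ n # dec) | inc dec. pyr_seq n inc dec}"

definition charvec :: "nat set set \<Rightarrow> (nat set \<Rightarrow> real)" where
  "charvec T = (\<lambda>e. if e \<in> T then 1 else 0)"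

definition PYR :: "nat \<Rightarrow> (nat set \<Rightarrow> real) set" where
  "PYR n = convex hull (charvec ` PT n)"

text \<open>Code of a tour: entry i (3 \<le> i \<le> n-1) is 1 iff i is visited in the
  increasing part, the tour being oriented so that 2 is in the increasing part.\<close>
definition pyr_code :: "nat \<Rightarrow> nat set set \<Rightarrow> nat \<Rightarrow> nat" where
  "pyr_code n T i = (if \<exists>inc dec. pyr_seq n inc dec \<and> 2 \<in> set inc \<and>
        tour_edges (1 # inc @ n # dec) = T \<and> i \<in> set inc then 1 else 0)"

definition adjacent_in :: "('a::real_vector) set \<Rightarrow> 'a \<Rightarrow> 'a \<Rightarrow> bool" where
  "adjacent_in P x y \<longleftrightarrow> x \<noteq> y \<and> closed_segment x y face_of P"

end

theory Submission
  imports Defs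
begin


definition consec :: "nat set \<Rightarrow> nat \<Rightarrow> nat \<Rightarrow> bool" where
  "consec S a b \<longleftrightarrow> a \<in> S \<and> b \<in> S \<and> a < b \<and> (\<forall>c\<in>S. \<not> (a < c \<and> c < b))"
definition CC :: "nat set \<Rightarrow> nat set set" where
  "CC S = {{a,b} | a b. consec S a b}"
definition side :: "nat \<Rightarrow> nat set \<Rightarrow> bool \<Rightarrow> nat set" where
  "side n A s = insert 1 (insert n (if s then A else {2..n-1} - A))"
definition EE :: "nat \<Rightarrow> nat set \<Rightarrow> nat set set" where
  "EE n A = CC (side n A True) \<union> CC (side n A False)"

fun pairs :: "'a list \<Rightarrow> 'a set set" where
  "pairs (x#y#r) = insert {x,y} (pairs (y#r))" | "pairs _ = {}"

lemma pairs_append: "pairs (u @ y # v) = pairs (u @ [y]) \<union> pairs (y # v)"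
proof (induction u)
  case Nil then show ?case by simp
next
  case (Cons x u) then show ?case by (cases u) auto
qed

lemma pairs_nth: "pairs L = {{L!k, L!Suc k}| k. Suc k < length L}"
proof (induction L rule: pairs.induct)
  case (1 x y r)
  have eq: "{{(x#y#r)!k, (x#y#r)!Suc k}| k. Suc k < length (x#y#r)}
     = insert {x,y} {{(y#r)!k, (y#r)!Suc k}| k. Suc k < length (y#r)}" (is "?L = ?R")
  proof (intro set_eqI iffI)
    fix e assume "e \<in> ?L"
    then obtain k where e: "e = {(x#y#r)!k, (x#y#r)!Suc k}" "Suc k < length (x#y#r)" by blast
    show "e \<in> ?R"
    proof (cases k)
      case 0 then show ?thesis using e by simp
    next
      case (Suc j) then show ?thesis using e by auto
    qed
  next
    fix e assume "e \<in> ?R"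
    then consider "e = {x,y}" | j where "e = {(y#r)!j, (y#r)!Suc j}" "Suc j < length (y#r)" by blast
    then show "e \<in> ?L"
    proof cases
      case 1
      have "Suc 0 < length (x#y#r)" by simp
      moreover have "e = {(x#y#r)!0, (x#y#r)!Suc 0}" using 1 by simp
      ultimately show ?thesis by blast
    next
      case (2 j)
      have "Suc (Suc j) < length (x#y#r)" using 2 by simp
      moreover have "e = {(x#y#r)!Suc j, (x#y#r)!Suc (Suc j)}" using 2 by simp
      ultimately show ?thesis by blast
    qed
  qed
  show ?case by (simp only: pairs.simps(1) 1 eq)
qed auto

lemma tour_pairs: assumes "xs \<noteq> []" shows "tour_edges xs = pairs (xs @ [hd xs])"
  unfolding tour_edges_def pairs_nth
proof (intro set_eqI iffI)
  fix e assume "e \<in> {{xs ! k, xs ! ((k + 1) mod length xs)} |k. k < length xs}"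
  then obtain k where e: "e = {xs ! k, xs ! ((k + 1) mod length xs)}" "k < length xs" by blast
  have a: "(xs @ [hd xs]) ! k = xs ! k" using e(2) by (simp add: nth_append)
  have b: "(xs @ [hd xs]) ! Suc k = xs ! ((k + 1) mod length xs)"
  proof (cases "Suc k < length xs")
    case True then show ?thesis by (simp add: nth_append)
  next
    case False then have "Suc k = length xs" using e(2) by simp
    then show ?thesis using assms by (simp add: nth_append hd_conv_nth)
  qed
  have "Suc k < length (xs @ [hd xs])" using e(2) by simp
  moreover have "e = {(xs @ [hd xs]) ! k, (xs @ [hd xs]) ! Suc k}" using a b e(1) by simp
  ultimately show "e \<in> {{(xs @ [hd xs]) ! k, (xs @ [hd xs]) ! Suc k} |k. Suc k < length (xs @ [hd xs])}"
    by blast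
next
  fix e assume "e \<in> {{(xs @ [hd xs]) ! k, (xs @ [hd xs]) ! Suc k} |k. Suc k < length (xs @ [hd xs])}"
  then obtain k where e: "e = {(xs @ [hd xs]) ! k, (xs @ [hd xs]) ! Suc k}" "Suc k < length (xs @ [hd xs])" by blast
  have k: "k < length xs" using e(2) by simp
  have a: "(xs @ [hd xs]) ! k = xs ! k" using k by (simp add: nth_append)
  have b: "(xs @ [hd xs]) ! Suc k = xs ! ((k + 1) mod length xs)"
  proof (cases "Suc k < length xs")
    case True then show ?thesis by (simp add: nth_append)
  next
    case False then have "Suc k = length xs" using k by simp
    then show ?thesis using assms by (simp add: nth_append hd_conv_nth)
  qed
  have "e = {xs ! k, xs ! ((k + 1) mod length xs)}" using a b e(1) by simp
  then show "e \<in> {{xs ! k, xs ! ((k + 1) mod length xs)} |k. k < length xs}"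
    using k by blast
qed

lemma pairs_rev: "pairs (rev L) = pairs L"
proof (induction L rule: pairs.induct)
  case (1 x y r)
  have "pairs (rev (x#y#r)) = pairs (rev r @ y # [x])" by simp
  also have "\<dots> = pairs (rev (y#r)) \<union> {{x,y}}" by (subst pairs_append) (auto simp: insert_commute)
  finally show ?case using 1 by auto
qed auto

lemma consec_insert_min:
  assumes "\<forall>s\<in>S. x < s" "y \<in> S" "\<forall>s\<in>S. y \<le> s"
  shows "consec (insert x S) a b \<longleftrightarrow> (a = x \<and> b = y) \<or> consec S a b"
  using assms unfolding consec_def
  apply safe
  apply auto
  by (meson antisym not_less)

lemma pairs_sorted: "sorted_wrt (<) L \<Longrightarrow> pairs L = CC (set L)"
proof (induction L rule: pairs.induct)
  case (1 x y r)
  have m: "\<forall>s\<in>set (y#r). x < s" "\<forall>s\<in>set (y#r). y \<le> s" using 1(2) by auto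
  have "CC (set (x#y#r)) = insert {x,y} (CC (set (y#r)))"
    unfolding CC_def using consec_insert_min[OF m(1) _ m(2)] by auto
  then show ?case using 1 by simp
next
  case "2_1" then show ?case by (auto simp: CC_def consec_def)
next
  case ("2_2" v) then show ?case by (auto simp: CC_def consec_def)
qed

lemma tour_EE:
  assumes ps: "pyr_seq n inc dec" and n: "n \<ge> 2"
  shows "tour_edges (1 # inc @ n # dec) = EE n (set inc)"
proof -
  have si: "set inc \<subseteq> {2..n-1}" and sd: "set dec = {2..n-1} - set inc"
    and s1: "sorted_wrt (<) inc" and s2: "sorted_wrt (>) dec"
    using ps unfolding pyr_seq_def by auto
  have "tour_edges (1 # inc @ n # dec) = pairs ((1 # inc) @ n # (dec @ [1]))"
    by (subst tour_pairs) auto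
  also have "\<dots> = pairs (1 # inc @ [n]) \<union> pairs (n # dec @ [1])"
    by (subst pairs_append) simp
  also have "pairs (n # dec @ [1]) = pairs (1 # rev dec @ [n])"
    using pairs_rev[of "n # dec @ [1]"] by simp
  also have "pairs (1 # inc @ [n]) = CC (set (1 # inc @ [n]))"
  proof (rule pairs_sorted)
    have "\<forall>x\<in>set inc. 1 < x \<and> x < n"
    proof
      fix x assume "x \<in> set inc" then have "x \<in> {2..n-1}" using si by blast
      then show "1 < x \<and> x < n" by auto
    qed
    then show "sorted_wrt (<) (1 # inc @ [n])" using s1 n by (auto simp: sorted_wrt_append)
  qed
  also have "pairs (1 # rev dec @ [n]) = CC (set (1 # rev dec @ [n]))"
  proof (rule pairs_sorted)
    have "\<forall>x\<in>set dec. 1 < x \<and> x < n" using sd by auto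
    moreover have "sorted_wrt (<) (rev dec)" using s2 by (simp add: sorted_wrt_rev)
    ultimately show "sorted_wrt (<) (1 # rev dec @ [n])" using n by (auto simp: sorted_wrt_append)
  qed
  finally show ?thesis unfolding EE_def side_def using sd by simp
qed



lemma side_mem: "c \<in> {2..n-1} \<Longrightarrow> c \<in> side n A s \<longleftrightarrow> (c \<in> A \<longleftrightarrow> s)"
  unfolding side_def by auto

lemma side_1n: "1 \<in> side n A s" "n \<in> side n A s"
  unfolding side_def by auto

lemma side_finite: "A \<subseteq> {2..n-1} \<Longrightarrow> finite (side n A s)"
  unfolding side_def by (auto intro: finite_subset)

lemma side_sub: "A \<subseteq> {2..n-1} \<Longrightarrow> n \<ge> 1 \<Longrightarrow> side n A s \<subseteq> {1..n}"
  unfolding side_def by (auto simp: subset_iff)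

lemma CC_mem: "{a,b} \<in> CC S \<Longrightarrow> a < b \<Longrightarrow> consec S a b"
  unfolding CC_def consec_def by (auto simp: doubleton_eq_iff)

lemma CC_intro: "consec S a b \<Longrightarrow> {a,b} \<in> CC S"
  unfolding CC_def by blast

lemma EE_mem: "{a,b} \<in> EE n A \<Longrightarrow> a < b \<Longrightarrow> \<exists>s. consec (side n A s) a b"
  unfolding EE_def using CC_mem by blast

lemma EE_intro: "consec (side n A s) a b \<Longrightarrow> {a,b} \<in> EE n A"
  unfolding EE_def using CC_intro by (cases s) auto

lemma EE_sym: "A \<subseteq> {2..n-1} \<Longrightarrow> EE n ({2..n-1} - A) = EE n A"
  unfolding EE_def side_def by (auto simp: double_diff)

lemma EE_Kn: assumes "A \<subseteq> {2..n-1}" "n \<ge> 1" shows "EE n A \<subseteq> Kn_edges n"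
proof
  fix e assume "e \<in> EE n A"
  then obtain s a b where "consec (side n A s) a b" "e = {a,b}" unfolding EE_def CC_def by blast
  then show "e \<in> Kn_edges n" using side_sub[OF assms] unfolding consec_def Kn_edges_def by blast
qed

lemma consec_between: "consec S a b \<Longrightarrow> a < c \<Longrightarrow> c < b \<Longrightarrow> c \<notin> S"
  unfolding consec_def by blast

lemma L2:
  assumes "finite S" "a \<in> S" "c \<in> S" "a < m" "m < c" "m \<notin> S"
  shows "\<exists>i j. consec S i j \<and> i < m \<and> m < j"
proof -
  let ?L = "{x\<in>S. x < m}" and ?U = "{x\<in>S. m < x}"
  have fL: "finite ?L" "?L \<noteq> {}" and fU: "finite ?U" "?U \<noteq> {}" using assms by auto
  define i where "i = Max ?L"
  define j where "j = Min ?U"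
  have i: "i \<in> S" "i < m" using Max_in[OF fL] unfolding i_def by auto
  have j: "j \<in> S" "m < j" using Min_in[OF fU] unfolding j_def by auto
  have "\<forall>x\<in>S. \<not> (i < x \<and> x < j)"
  proof (intro ballI notI)
    fix x assume x: "x \<in> S" "i < x \<and> x < j"
    show False
    proof (cases "x < m")
      case True then have "x \<le> i" unfolding i_def using fL x by (intro Max_ge) auto
      then show False using x by simp
    next
      case False then have "m < x" using x assms(6) by (cases "x = m") auto
      then have "j \<le> x" unfolding j_def using fU x by (intro Min_le) auto
      then show False using x by simp
    qed
  qed
  then have "consec S i j" unfolding consec_def using i j by auto
  then show ?thesis using i j by blast
qed

lemma short_edge:
  assumes "A \<subseteq> {2..n-1}" "2 \<le> k" "Suc k \<le> n - 1"
  shows "{k, Suc k} \<in> EE n A \<longleftrightarrow> (k \<in> A \<longleftrightarrow> Suc k \<in> A)"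
proof
  assume "{k, Suc k} \<in> EE n A"
  then obtain s where c: "consec (side n A s) k (Suc k)" using EE_mem by blast
  then have "k \<in> side n A s" "Suc k \<in> side n A s" unfolding consec_def by auto
  then show "(k \<in> A \<longleftrightarrow> Suc k \<in> A)" using side_mem[of k n A s] side_mem[of "Suc k" n A s] assms by auto
next
  assume h: "(k \<in> A \<longleftrightarrow> Suc k \<in> A)"
  let ?s = "k \<in> A"
  have "k \<in> side n A ?s" "Suc k \<in> side n A ?s"
    using side_mem[of k n A ?s] side_mem[of "Suc k" n A ?s] assms h by auto
  then have "consec (side n A ?s) k (Suc k)" unfolding consec_def by auto
  then show "{k, Suc k} \<in> EE n A" by (rule EE_intro)
qed

lemma SW:
  assumes "A \<subseteq> {2..n-1}" "B \<subseteq> {2..n-1}" "2 \<in> A" "2 \<in> B"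
    and sw: "\<And>k. 2 \<le> k \<Longrightarrow> Suc k \<le> n - 1 \<Longrightarrow> ((k \<in> A \<longleftrightarrow> Suc k \<in> A) \<longleftrightarrow> (k \<in> B \<longleftrightarrow> Suc k \<in> B))"
  shows "A = B"
proof -
  have "\<forall>k. 2 \<le> k \<longrightarrow> k \<le> n-1 \<longrightarrow> (k \<in> A \<longleftrightarrow> k \<in> B)"
  proof (intro allI)
    fix k show "2 \<le> k \<longrightarrow> k \<le> n-1 \<longrightarrow> (k \<in> A \<longleftrightarrow> k \<in> B)"
    proof (induction k)
      case 0 then show ?case by simp
    next
      case (Suc k)
      show ?case
      proof (intro impI)
        assume h: "2 \<le> Suc k" "Suc k \<le> n - 1"
        show "Suc k \<in> A \<longleftrightarrow> Suc k \<in> B"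
        proof (cases "Suc k = 2")
          case True then show ?thesis by (metis assms(3,4))
        next
          case False then have "2 \<le> k" using h by simp
          then show ?thesis using Suc h sw[of k] by auto
        qed
      qed
    qed
  qed
  then show ?thesis using assms(1,2) by auto
qed

lemma EE_inj:
  assumes "A \<subseteq> {2..n-1}" "B \<subseteq> {2..n-1}" "2 \<in> A" "2 \<in> B" "EE n A = EE n B"
  shows "A = B"
proof (rule SW[OF assms(1-4)])
  fix k assume k: "2 \<le> k" "Suc k \<le> n - 1"
  show "(k \<in> A \<longleftrightarrow> Suc k \<in> A) \<longleftrightarrow> (k \<in> B \<longleftrightarrow> Suc k \<in> B)"
    using short_edge[OF assms(1) k] short_edge[OF assms(2) k] assms(5) by simp
qed

lemma G:
  assumes n: "n \<ge> 4" and X: "X \<subseteq> {2..n-1}" and Y: "Y \<subseteq> {2..n-1}" and Z: "Z \<subseteq> {2..n-1}"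
    and "2 \<in> Y" "2 \<in> Z" and sub: "EE n Z \<subseteq> EE n X \<union> EE n Y"
    and H: "\<And>a b. a + 2 \<le> b \<Longrightarrow> {a,b} \<in> EE n Z \<Longrightarrow> {a,b} \<in> EE n X \<Longrightarrow> a = 1 \<and> b = 3"
  shows "Z = Y"
proof (rule SW[OF Z Y \<open>2 \<in> Z\<close> \<open>2 \<in> Y\<close>])
  fix k assume k: "2 \<le> k" "Suc k \<le> n - 1"
  have kI: "k \<in> {2..n-1}" "Suc k \<in> {2..n-1}" using k by auto
  show "(k \<in> Z \<longleftrightarrow> Suc k \<in> Z) \<longleftrightarrow> (k \<in> Y \<longleftrightarrow> Suc k \<in> Y)"
  proof (cases "k \<in> Z \<longleftrightarrow> Suc k \<in> Z")
    case True
    let ?S = "side n Z (k \<notin> Z)"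
    have nk: "k \<notin> ?S" "Suc k \<notin> ?S" using side_mem[OF kI(1)] side_mem[OF kI(2)] True by auto
    obtain i j where c: "consec ?S i j" "i < k" "k < j"
      using L2[OF side_finite[OF Z] side_1n(1) side_1n(2) _ _ nk(1)] k by force
    have j: "Suc k < j" using c(3) nk(2) c(1) unfolding consec_def by (cases "j = Suc k") auto
    have e: "{i,j} \<in> EE n Z" using EE_intro[OF c(1)] .
    have "{i,j} \<notin> EE n X"
    proof
      assume "{i,j} \<in> EE n X"
      from H[OF _ e this] j c(2) k show False by auto
    qed
    then have "{i,j} \<in> EE n Y" using e sub by blast
    then obtain s where "consec (side n Y s) i j" using EE_mem c j by force
    then have "k \<notin> side n Y s" "Suc k \<notin> side n Y s" using consec_between c j by auto
    then show ?thesis using True side_mem[OF kI(1)] side_mem[OF kI(2)] by auto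
  next
    case False
    let ?S = "side n Z (k \<in> Z)"
    have nk: "k \<in> ?S" "Suc k \<notin> ?S" using side_mem[OF kI(1)] side_mem[OF kI(2)] False by auto
    have "Suc k < n" using k by simp
    then obtain i j where c: "consec ?S i j" "i < Suc k" "Suc k < j"
      using L2[OF side_finite[OF Z] nk(1) side_1n(2) _ _ nk(2)] by force
    have ik: "i = k"
    proof (rule ccontr)
      assume "i \<noteq> k" then have "i < k" using c(2) by simp
      then show False using consec_between[OF c(1)] c(3) nk(1) by auto
    qed
    have e: "{k,j} \<in> EE n Z" using EE_intro[OF c(1)] ik by simp
    have "{k,j} \<notin> EE n X"
    proof
      assume "{k,j} \<in> EE n X"
      from H[OF _ e this] c(3) k show False by auto
    qed
    then have "{k,j} \<in> EE n Y" using e sub by blast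
    then obtain s where cs: "consec (side n Y s) k j" using EE_mem c ik by force
    then have "k \<in> side n Y s" "Suc k \<notin> side n Y s" using consec_between[OF cs] c unfolding consec_def by auto
    then show ?thesis using False side_mem[OF kI(1)] side_mem[OF kI(2)] by auto
  qed
qed



lemma side_I_True: "n \<ge> 2 \<Longrightarrow> side n {2..n-1} True = {1..n}"
  unfolding side_def by auto

lemma side_I_False: "side n {2..n-1} False = {1,n}"
  unfolding side_def by auto

lemma EE_I_long:
  assumes n: "n \<ge> 4" and e: "{a,b} \<in> EE n {2..n-1}" and ab: "a + 2 \<le> b"
  shows "a = 1 \<and> b = n"
proof -
  obtain s where c: "consec (side n {2..n-1} s) a b" using EE_mem[OF e] ab by force
  show ?thesis
  proof (cases s)
    case True
    then have c': "consec {1..n} a b" using c side_I_True n by simp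
    then have "Suc a \<in> {1..n}" unfolding consec_def using ab by auto
    then show ?thesis using consec_between[OF c', of "Suc a"] ab by simp
  next
    case False
    then have "consec {1,n} a b" using c side_I_False by simp
    then show ?thesis using n unfolding consec_def by auto
  qed
qed

lemma EE_1n:
  assumes n: "n \<ge> 4" and Z: "Z \<subseteq> {2..n-1}" "2 \<in> Z" and e: "{1,n} \<in> EE n Z"
  shows "Z = {2..n-1}"
proof -
  obtain s where c: "consec (side n Z s) 1 n" using EE_mem[OF e] n by force
  have s: "\<not> s"
  proof
    assume s
    have "2 \<in> side n Z s" using side_mem[of 2 n Z s] n Z \<open>s\<close> by auto
    then show False using consec_between[OF c, of 2] n by auto
  qed
  have "\<forall>x\<in>{2..n-1}. x \<in> Z"
  proof
    fix x assume x: "x \<in> {2..n-1}"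
    then have "1 < x" "x < n" using n by auto
    then have "x \<notin> side n Z s" using consec_between[OF c, of x] by blast
    then show "x \<in> Z" using side_mem[OF x, of Z s] s by auto
  qed
  then show ?thesis using Z by auto
qed

lemma EE_2_long:
  assumes n: "n \<ge> 4" and e: "{a,b} \<in> EE n {2}" and ab: "a + 2 \<le> b"
  shows "(a = 2 \<and> b = n) \<or> (a = 1 \<and> b = 3)"
proof -
  obtain s where c: "consec (side n {2} s) a b" using EE_mem[OF e] ab by force
  have ss: "side n {2} s \<subseteq> {1..n}" using side_sub[of "{2}" n s] n by auto
  have bn: "b \<le> n" "1 \<le> a" using c ss unfolding consec_def by auto
  show ?thesis
  proof (cases s)
    case True
    then have c': "consec {1,2,n} a b" using c unfolding side_def by (simp add: insert_commute)
    then show ?thesis using ab n unfolding consec_def by auto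
  next
    case False
    have sm: "\<And>x. x \<in> {2..n-1} \<Longrightarrow> x \<in> side n {2} s \<longleftrightarrow> x \<noteq> 2"
      using side_mem False by auto
    have "Suc a \<in> {2..n-1}" using bn ab by auto
    moreover have "Suc a \<notin> side n {2} s" using consec_between[OF c, of "Suc a"] ab by auto
    ultimately have a: "a = 1" using sm by auto
    have "b = 3"
    proof (rule ccontr)
      assume "b \<noteq> 3" then have "3 < b" using a ab by simp
      then have "3 \<in> {2..n-1}" using bn by auto
      then have "3 \<in> side n {2} s" using sm by auto
      then show False using consec_between[OF c, of 3] a \<open>3 < b\<close> by auto
    qed
    then show ?thesis using a by simp
  qed
qed

lemma EE_2n:
  assumes n: "n \<ge> 4" and Z: "Z \<subseteq> {2..n-1}" "2 \<in> Z" and e: "{2,n} \<in> EE n Z"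
  shows "Z = {2}"
proof -
  obtain s where c: "consec (side n Z s) 2 n" using EE_mem[OF e] n by force
  have "2 \<in> side n Z s" using c unfolding consec_def by auto
  moreover have "(2::nat) \<in> {2..n-1}" using n by simp
  ultimately have s: s using side_mem[of 2 n Z s] Z(2) by blast
  have "\<forall>x\<in>Z. x = 2"
  proof
    fix x assume x: "x \<in> Z"
    then have xI: "x \<in> {2..n-1}" using Z by blast
    have "x \<in> side n Z s" using side_mem[OF xI] s x by blast
    have "x < n" using xI n by auto
    show "x = 2"
    proof (rule ccontr)
      assume "x \<noteq> 2" then have "2 < x" using xI by simp
      then show False using consec_between[OF c \<open>2 < x\<close> \<open>x < n\<close>] \<open>x \<in> side n Z s\<close> by blast
    qed
  qed
  then show ?thesis using Z by blast
qed

lemma G_I: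
  assumes n: "n \<ge> 4" and Y: "Y \<subseteq> {2..n-1}" "2 \<in> Y" and Z: "Z \<subseteq> {2..n-1}" "2 \<in> Z"
    and ZI: "Z \<noteq> {2..n-1}" and sub: "EE n Z \<subseteq> EE n {2..n-1} \<union> EE n Y"
  shows "Z = Y"
proof (rule G[OF n _ Y(1) Z(1) Y(2) Z(2) sub])
  fix a b assume ab: "a + 2 \<le> b" "{a,b} \<in> EE n Z" "{a,b} \<in> EE n {2..n-1}"
  then have "a = 1 \<and> b = n" using EE_I_long[OF n ab(3) ab(1)] by blast
  then have "Z = {2..n-1}" using EE_1n[OF n Z] ab by simp
  then show "a = 1 \<and> b = 3" using ZI by simp
qed auto

lemma G_2:
  assumes n: "n \<ge> 4" and Y: "Y \<subseteq> {2..n-1}" "2 \<in> Y" and Z: "Z \<subseteq> {2..n-1}" "2 \<in> Z"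
    and ZI: "Z \<noteq> {2}" and sub: "EE n Z \<subseteq> EE n {2} \<union> EE n Y"
  shows "Z = Y"
proof (rule G[OF n _ Y(1) Z(1) Y(2) Z(2) sub])
  fix a b assume ab: "a + 2 \<le> b" "{a,b} \<in> EE n Z" "{a,b} \<in> EE n {2}"
  then have "(a = 2 \<and> b = n) \<or> (a = 1 \<and> b = 3)" using EE_2_long[OF n ab(3) ab(1)] by blast
  moreover have "\<not> (a = 2 \<and> b = n)" using EE_2n[OF n Z] ab ZI by auto
  ultimately show "a = 1 \<and> b = 3" by blast
next
  show "{2} \<subseteq> {2..n-1}" using n by auto
qed

lemma pyr_seq_facts: "pyr_seq n inc dec \<Longrightarrow> set inc \<subseteq> {2..n-1} \<and> set dec = {2..n-1} - set inc"
  unfolding pyr_seq_def by auto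

lemma pyr_seq_swap: "pyr_seq n inc dec \<Longrightarrow> pyr_seq n (rev dec) (rev inc)"
  unfolding pyr_seq_def by (auto simp: sorted_wrt_rev)

lemma PT_rep:
  assumes n: "n \<ge> 4" and T: "T \<in> PT n"
  shows "\<exists>inc dec. pyr_seq n inc dec \<and> 2 \<in> set inc \<and> tour_edges (1 # inc @ n # dec) = T
          \<and> T = EE n (set inc) \<and> set inc \<subseteq> {2..n-1}"
proof -
  obtain inc dec where ps: "pyr_seq n inc dec" and T: "T = tour_edges (1 # inc @ n # dec)"
    using T unfolding PT_def by blast
  have f: "set inc \<subseteq> {2..n-1}" "set dec = {2..n-1} - set inc" using pyr_seq_facts[OF ps] by auto
  have TE: "T = EE n (set inc)" using tour_EE[OF ps] n T by simp
  show ?thesis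
  proof (cases "2 \<in> set inc")
    case True then show ?thesis using ps T TE f by blast
  next
    case False
    have ps': "pyr_seq n (rev dec) (rev inc)" using pyr_seq_swap[OF ps] .
    have "2 \<in> set (rev dec)" using False f n by auto
    moreover have t1: "tour_edges (1 # rev dec @ n # rev inc) = EE n (set dec)" using tour_EE[OF ps'] n by simp
    moreover have t2: "EE n (set dec) = T" using TE f EE_sym[OF f(1)] by simp
    moreover have "set (rev dec) \<subseteq> {2..n-1}" using f by auto
    moreover have "T = EE n (set (rev dec))" using t2 by simp
    moreover have "tour_edges (1 # rev dec @ n # rev inc) = T" using t1 t2 by simp
    ultimately show ?thesis using ps' by blast
  qed
qed

lemma PT_EE:
  assumes n: "n \<ge> 4" and T: "T \<in> PT n"
  shows "\<exists>A. A \<subseteq> {2..n-1} \<and> 2 \<in> A \<and> T = EE n A"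
  using PT_rep[OF assms] by blast

lemma if10: "(if P then 1 else 0) = (1::nat) \<Longrightarrow> P"
  by (cases P) auto

lemma code1:
  assumes n: "n \<ge> 4" and T: "T \<in> PT n" and c: "\<forall>i\<in>{3..n-1}. pyr_code n T i = 1"
  shows "T = EE n {2..n-1}"
proof -
  obtain A where A: "A \<subseteq> {2..n-1}" "2 \<in> A" "T = EE n A" using PT_EE[OF n T] by blast
  have "\<forall>i\<in>{3..n-1}. i \<in> A"
  proof
    fix i assume i: "i \<in> {3..n-1}"
    then have "pyr_code n T i = 1" using c by blast
    then have "\<exists>inc dec. pyr_seq n inc dec \<and> 2 \<in> set inc \<and> tour_edges (1 # inc @ n # dec) = T
      \<and> i \<in> set inc" unfolding pyr_code_def by (rule if10)
    then obtain inc dec where w: "pyr_seq n inc dec" "2 \<in> set inc" "tour_edges (1 # inc @ n # dec) = T"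
      "i \<in> set inc" by blast
    have n2: "n \<ge> 2" using n by simp
    have "T = EE n (set inc)" unfolding w(3)[symmetric] by (rule tour_EE[OF w(1) n2])
    then have ee: "EE n (set inc) = EE n A" using A(3) by simp
    have si: "set inc \<subseteq> {2..n-1}" using pyr_seq_facts[OF w(1)] by blast
    have "set inc = A" by (rule EE_inj[OF si A(1) w(2) A(2) ee])
    then show "i \<in> A" using w(4) by simp
  qed
  then have "A = {2..n-1}"
  proof -
    assume h: "\<forall>i\<in>{3..n-1}. i \<in> A"
    show "A = {2..n-1}"
    proof (intro equalityI subsetI)
      fix x assume x: "x \<in> {2..n-1}"
      show "x \<in> A"
      proof (cases "x = 2")
        case True then show ?thesis using A(2) by simp
      next
        case False then have "x \<in> {3..n-1}" using x by auto
        then show ?thesis using h by blast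
      qed
    qed (use A(1) in blast)
  qed
  then show ?thesis using A by simp
qed

lemma code0:
  assumes n: "n \<ge> 4" and T: "T \<in> PT n" and c: "\<forall>i\<in>{3..n-1}. pyr_code n T i = 0"
  shows "T = EE n {2}"
proof -
  obtain inc dec where w: "pyr_seq n inc dec" "2 \<in> set inc" "tour_edges (1 # inc @ n # dec) = T"
    "T = EE n (set inc)" "set inc \<subseteq> {2..n-1}" using PT_rep[OF n T] by blast
  have "\<forall>i\<in>set inc. i = 2"
  proof
    fix i assume i: "i \<in> set inc"
    show "i = 2"
    proof (rule ccontr)
      assume "i \<noteq> 2" then have "i \<in> {3..n-1}" using i w(5) by auto
      then have "pyr_code n T i = 0" using c by blast
      moreover have "\<exists>inc dec. pyr_seq n inc dec \<and> 2 \<in> set inc \<and> tour_edges (1 # inc @ n # dec) = T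
      \<and> i \<in> set inc" using w i by blast
      then have "pyr_code n T i = 1" unfolding pyr_code_def by (rule if_P)
      ultimately show False by simp
    qed
  qed
  then have "set inc = {2}" using w(2) by blast
  then show ?thesis using w(4) by simp
qed

lemma main_comb:
  assumes n: "n \<ge> 4" and X: "X = {2..n-1} \<or> X = {2}"
    and Y: "Y \<subseteq> {2..n-1}" "2 \<in> Y" and Z: "Z \<subseteq> {2..n-1}" "2 \<in> Z"
    and sub: "EE n Z \<subseteq> EE n X \<union> EE n Y"
  shows "Z = X \<or> Z = Y"
proof (cases "Z = X")
  case True then show ?thesis by simp
next
  case False
  show ?thesis
  proof (cases "X = {2..n-1}")
    case True then show ?thesis using G_I[OF n Y Z] False sub by simp
  next
    case F2: False
    then have "X = {2}" using X by simp
    then show ?thesis using G_2[OF n Y Z] False sub by simp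
  qed
qed


lemma fsum_lin:
  fixes D :: "nat set set" and a b :: "nat set \<Rightarrow> real"
  shows "(\<Sum>e\<in>D. (u *\<^sub>R a + w *\<^sub>R b) e) = u * (\<Sum>e\<in>D. a e) + w * (\<Sum>e\<in>D. b e)"
  by (simp add: scaleR_fun_def sum.distrib sum_distrib_left)

lemma Kn_finite: "finite (Kn_edges n)"
proof (rule finite_subset)
  show "Kn_edges n \<subseteq> Pow {1..n}" unfolding Kn_edges_def by auto
qed auto

lemma PT_finite: assumes n: "n \<ge> 4" shows "finite (PT n)"
proof (rule finite_subset)
  show "PT n \<subseteq> EE n ` Pow {2..n-1}" using PT_EE[OF n] by blast
qed auto

theorem mainTheorem6:
  fixes n :: nat
  assumes "n \<ge> 4"
  shows "\<forall>T\<in>PT n. ((\<forall>i\<in>{3..n-1}. pyr_code n T i = 1) \<or> (\<forall>i\<in>{3..n-1}. pyr_code n T i = 0)) \<longrightarrow>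
           (\<forall>v. v extreme_point_of PYR n \<and> v \<noteq> charvec T \<longrightarrow> adjacent_in (PYR n) (charvec T) v)"
proof (intro ballI impI allI)
  have n: "n \<ge> 4" using assms .
  fix T v
  assume T: "T \<in> PT n"
    and code: "(\<forall>i\<in>{3..n-1}. pyr_code n T i = 1) \<or> (\<forall>i\<in>{3..n-1}. pyr_code n T i = 0)"
    and v: "v extreme_point_of PYR n \<and> v \<noteq> charvec T"
  obtain X where X: "X = {2..n-1} \<or> X = {2}" "T = EE n X"
    using code code1[OF n T] code0[OF n T] by blast
  have XI: "X \<subseteq> {2..n-1}" using X(1) n by auto
  let ?V = "charvec ` PT n"
  have finV: "finite ?V" using PT_finite[OF n] by simp
  have "v \<in> ?V" using extreme_point_of_convex_hull v unfolding PYR_def by blast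
  then obtain Y' where Y': "Y' \<in> PT n" "v = charvec Y'" by blast
  obtain Y where Y: "Y \<subseteq> {2..n-1}" "2 \<in> Y" "Y' = EE n Y" using PT_EE[OF n Y'(1)] by blast
  define cx where "cx = charvec T"
  define D where "D = Kn_edges n - (EE n X \<union> EE n Y)"
  define f where "f = (\<lambda>p::nat set \<Rightarrow> real. \<Sum>e\<in>D. p e)"
  have finD: "finite D" unfolding D_def using Kn_finite by simp
  have flin: "f (u *\<^sub>R a + w *\<^sub>R b) = u * f a + w * f b" for u w a b
    unfolding f_def by (rule fsum_lin)
  have fcx: "f cx = 0" unfolding f_def cx_def charvec_def D_def X(2) by simp
  have fcy: "f v = 0" unfolding f_def Y'(2) charvec_def D_def Y(3) by simp
  have cxV: "cx \<in> ?V" unfolding cx_def using T by simp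
  have cyV: "v \<in> ?V" using Y' by simp
  have fz: "1 \<le> f z" if z: "z \<in> ?V - {cx, v}" for z
  proof -
    obtain Z' where Z': "Z' \<in> PT n" "z = charvec Z'" using z by blast
    obtain Z where Z: "Z \<subseteq> {2..n-1}" "2 \<in> Z" "Z' = EE n Z" using PT_EE[OF n Z'(1)] by blast
    have "\<exists>e\<in>D. e \<in> EE n Z"
    proof (rule ccontr)
      assume "\<not> (\<exists>e\<in>D. e \<in> EE n Z)"
      moreover have "EE n Z \<subseteq> Kn_edges n" using EE_Kn[OF Z(1)] n by simp
      ultimately have "EE n Z \<subseteq> EE n X \<union> EE n Y" unfolding D_def by blast
      then have "Z = X \<or> Z = Y" using main_comb[OF n X(1) Y(1,2) Z(1,2)] by blast
      then have "z = cx \<or> z = v" unfolding cx_def using Z'(2) Z(3) X(2) Y'(2) Y(3) by auto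
      then show False using z by blast
    qed
    then obtain e where e: "e \<in> D" "e \<in> EE n Z" by blast
    have "z e \<le> f z" unfolding f_def
      by (rule member_le_sum[OF e(1) _ finD]) (simp add: Z'(2) charvec_def)
    moreover have "z e = 1" using e(2) unfolding Z'(2) Z(3) charvec_def by simp
    ultimately show ?thesis by simp
  qed
  have aff: "affine hull {cx, v} \<subseteq> {p. f p = 0}"
  proof (rule hull_minimal)
    show "{cx, v} \<subseteq> {p. f p = 0}" using fcx fcy by simp
    show "affine {p. f p = 0}" unfolding affine_def using flin by simp
  qed
  have cvx: "convex hull (?V - {cx, v}) \<subseteq> {p. 1 \<le> f p}"
  proof (rule hull_minimal)
    show "?V - {cx, v} \<subseteq> {p. 1 \<le> f p}" using fz by blast
    show "convex {p. 1 \<le> f p}" unfolding convex_def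
    proof (intro ballI allI impI)
      fix x y :: "nat set \<Rightarrow> real" and u w :: real
      assume x: "x \<in> {p. 1 \<le> f p}" and y: "y \<in> {p. 1 \<le> f p}" and u: "0 \<le> u" and w: "0 \<le> w" and uw: "u + w = 1"
      have "u * 1 \<le> u * f x" using x u by (intro mult_left_mono) auto
      moreover have "w * 1 \<le> w * f y" using y w by (intro mult_left_mono) auto
      ultimately have "1 \<le> u * f x + w * f y" using uw by simp
      then show "u *\<^sub>R x + w *\<^sub>R y \<in> {p. 1 \<le> f p}" using flin by simp
    qed
  qed
  have disj: "affine hull {cx, v} \<inter> convex hull (?V - {cx, v}) = {}"
    using aff cvx by force
  have "convex hull {cx, v} face_of convex hull ?V"
    by (rule face_of_convex_hulls[OF finV _ disj]) (use cxV cyV in blast)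
  then have "closed_segment cx v face_of PYR n"
    unfolding PYR_def segment_convex_hull .
  then show "adjacent_in (PYR n) (charvec T) v"
    unfolding adjacent_in_def cx_def[symmetric] using v cx_def by auto
qed

end
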